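(* Let $X$ be a set of pointed Kripke models, $\Lambda$ a normal modal logic sound with respect to $X$, and $D\subseteq\boldsymbol{\mathcal{L}}_{\Lambda}$ a descriptor. If $\Lambda$ is compact and $D$ is $\Lambda$-representative, then $[\boldsymbol{\varphi}]_D$ is clopen in $\mathcal{T}_D$ for every $\boldsymbol{\varphi}\in\boldsymbol{\mathcal{L}}_{\Lambda}$. If moreover $X$ is saturated with respect to $D$, then $\mathcal{T}_D$ reflects $\Lambda$.
   Context: Signature: countable non-empty sets $\Phi$, $\mathcal{I}$; $\mathcal{L}$: $\varphi ::= \top\mid p\mid\neg\varphi\mid\varphi\wedge\varphi\mid\Box_i\varphi$ on pointed Kripke models, standard semantics. $\boldsymbol{\varphi}$: formulas $\Lambda$-provably equivalent to $\varphi$; $\boldsymbol{\mathcal{L}}_{\Lambda}=\{\boldsymbol{\varphi}\}$. $\Lambda$ is compact if a set of formulas is $\Lambda$-consistent iff all its finite subsets are. For $D\subseteq\boldsymbol{\mathcal{L}}_{\Lambda}$: $\boldsymbol{x}_D=\{y\in X:\forall\boldsymbol{\varphi}\in D,\ y\models\varphi\iff x\models\varphi\}$, $X_D=\{\boldsymbol{x}_D:x\in X\}$; $\mathcal{T}_D$ is generated by the subbasis $\{\boldsymbol{x}:x\models\varphi\}$, $\{\boldsymbol{x}:x\models\neg\varphi\}$, $\boldsymbol{\varphi}\in D$. $D$ is $\Lambda$-representative if for every $\varphi\in\mathcal{L}$ there is $\{\boldsymbol{\psi}_i\}_{i\in I}\subseteq D$ such that for every $J\subseteq I$, $\{\psi_i\}_{i\in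 J}\cup\{\neg\psi_i\}_{i\in I\setminus J}$ $\Lambda$-entails $\varphi$ or $\neg\varphi$. $X$ is saturated w.r.t. $D$ if for all $Y,Y'\subseteq D$ with $B=\{\varphi:\boldsymbol{\varphi}\in Y\}\cup\{\neg\varphi:\boldsymbol{\varphi}\in Y'\}$ $\Lambda$-consistent, some $x\in X$ satisfies all of $B$. For $\boldsymbol{\varphi}\in\boldsymbol{\mathcal{L}}_{\Lambda}$, $[\boldsymbol{\varphi}]_D=\{\boldsymbol{x}\in X_D:\forall x\in\boldsymbol{x},\ x\models\varphi\}$. $\mathcal{T}_D$ reflects $\Lambda$ if for every $Y\subseteq X_D$: $Y$ is clopen in $\mathcal{T}_D$ iff $Y=[\boldsymbol{\varphi}]_D$ for some $\boldsymbol{\varphi}\in\boldsymbol{\mathcal{L}}_{\Lambda}$. *)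

theory Defs
  imports "HOL-Analysis.Analysis" "HOL-Library.Countable"
begin

datatype ('p, 'i) form =
    Top
  | Atom 'p
  | Neg "('p, 'i) form"
  | Conj "('p, 'i) form" "('p, 'i) form"
  | Box 'i "('p, 'i) form"

definition Disj :: "('p,'i) form \<Rightarrow> ('p,'i) form \<Rightarrow> ('p,'i) form" where
  "Disj a b = Neg (Conj (Neg a) (Neg b))"
definition Imp :: "('p,'i) form \<Rightarrow> ('p,'i) form \<Rightarrow> ('p,'i) form" where
  "Imp a b = Neg (Conj a (Neg b))"
definition Iff :: "('p,'i) form \<Rightarrow> ('p,'i) form \<Rightarrow> ('p,'i) form" where
  "Iff a b = Conj (Imp a b) (Imp b a)"

fun conj_list :: "('p,'i) form list \<Rightarrow> ('p,'i) form" where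
  "conj_list [] = Top"
| "conj_list (a # as) = Conj a (conj_list as)"

type_synonym ('w, 'p, 'i) kmodel = "('i \<Rightarrow> 'w \<Rightarrow> 'w \<Rightarrow> bool) \<times> ('p \<Rightarrow> 'w \<Rightarrow> bool)"
type_synonym ('w, 'p, 'i) pointed = "('w, 'p, 'i) kmodel \<times> 'w"

fun sat :: "('w, 'p, 'i) kmodel \<Rightarrow> 'w \<Rightarrow> ('p, 'i) form \<Rightarrow> bool" where
  "sat M w Top = True"
| "sat M w (Atom p) = snd M p w"
| "sat M w (Neg a) = (\<not> sat M w a)"
| "sat M w (Conj a b) = (sat M w a \<and> sat M w b)"
| "sat M w (Box i a) = (\<forall>v. fst M i w v \<longrightarrow> sat M v a)"

definition psat :: "('w, 'p, 'i) pointed \<Rightarrow> ('p, 'i) form \<Rightarrow> bool" where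
  "psat x a = sat (fst x) (snd x) a"

fun peval :: "(('p,'i) form \<Rightarrow> bool) \<Rightarrow> ('p,'i) form \<Rightarrow> bool" where
  "peval v Top = True"
| "peval v (Atom p) = v (Atom p)"
| "peval v (Neg a) = (\<not> peval v a)"
| "peval v (Conj a b) = (peval v a \<and> peval v b)"
| "peval v (Box i a) = v (Box i a)"

definition tautology :: "('p,'i) form \<Rightarrow> bool" where
  "tautology a = (\<forall>v. peval v a)"

fun subst :: "('p \<Rightarrow> ('p,'i) form) \<Rightarrow> ('p,'i) form \<Rightarrow> ('p,'i) form" where
  "subst s Top = Top"
| "subst s (Atom p) = s p"
| "subst s (Neg a) = Neg (subst s a)"
| "subst s (Conj a b) = Conj (subst s a) (subst s b)"
| "subst s (Box i a) = Box i (subst s a)"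

definition normal_logic :: "('p,'i) form set \<Rightarrow> bool" where
  "normal_logic L \<longleftrightarrow>
     (\<forall>a. tautology a \<longrightarrow> a \<in> L) \<and>
     (\<forall>i a b. Imp (Box i (Imp a b)) (Imp (Box i a) (Box i b)) \<in> L) \<and>
     (\<forall>a b. a \<in> L \<longrightarrow> Imp a b \<in> L \<longrightarrow> b \<in> L) \<and>
     (\<forall>i a. a \<in> L \<longrightarrow> Box i a \<in> L) \<and>
     (\<forall>s a. a \<in> L \<longrightarrow> subst s a \<in> L)"

definition eqc :: "('p,'i) form set \<Rightarrow> ('p,'i) form \<Rightarrow> ('p,'i) form set" where
  "eqc L a = {b. Iff a b \<in> L}"

definition Lbold :: "('p,'i) form set \<Rightarrow> ('p,'i) form set set" where
  "Lbold L = range (eqc L)"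

definition consistent :: "('p,'i) form set \<Rightarrow> ('p,'i) form set \<Rightarrow> bool" where
  "consistent L G \<longleftrightarrow> \<not> (\<exists>as. set as \<subseteq> G \<and> Neg (conj_list as) \<in> L)"

definition entails :: "('p,'i) form set \<Rightarrow> ('p,'i) form set \<Rightarrow> ('p,'i) form \<Rightarrow> bool" where
  "entails L G a \<longleftrightarrow> (\<exists>as. set as \<subseteq> G \<and> Imp (conj_list as) a \<in> L)"

definition compact_logic :: "('p,'i) form set \<Rightarrow> bool" where
  "compact_logic L \<longleftrightarrow>
     (\<forall>G. consistent L G \<longleftrightarrow> (\<forall>G0. G0 \<subseteq> G \<and> finite G0 \<longrightarrow> consistent L G0))"

definition sound_wrt :: "('p,'i) form set \<Rightarrow> ('w,'p,'i) pointed set \<Rightarrow> bool" where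
  "sound_wrt L X \<longleftrightarrow> (\<forall>a\<in>L. \<forall>x\<in>X. psat x a)"

definition cls :: "('p,'i) form set \<Rightarrow> ('w,'p,'i) pointed set \<Rightarrow> ('p,'i) form set set
                   \<Rightarrow> ('w,'p,'i) pointed \<Rightarrow> ('w,'p,'i) pointed set" where
  "cls L X D x = {y \<in> X. \<forall>a. eqc L a \<in> D \<longrightarrow> (psat y a \<longleftrightarrow> psat x a)}"

definition XD :: "('p,'i) form set \<Rightarrow> ('w,'p,'i) pointed set \<Rightarrow> ('p,'i) form set set
                   \<Rightarrow> ('w,'p,'i) pointed set set" where
  "XD L X D = cls L X D ` X"

definition sbset :: "('p,'i) form set \<Rightarrow> ('w,'p,'i) pointed set \<Rightarrow> ('p,'i) form set set
                   \<Rightarrow> ('p,'i) form \<Rightarrow> ('w,'p,'i) pointed set set" where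
  "sbset L X D a = {cls L X D x | x. x \<in> X \<and> psat x a}"

text \<open>The topology on \<open>X_D\<close> generated by the subbasis; the whole space \<open>X_D\<close> is added
  to the generating family so that the carrier is \<open>X_D\<close> (this changes nothing when
  \<open>D\<close> is nonempty).\<close>
definition TD :: "('p,'i) form set \<Rightarrow> ('w,'p,'i) pointed set \<Rightarrow> ('p,'i) form set set
                   \<Rightarrow> ('w,'p,'i) pointed set topology" where
  "TD L X D = topology_generated_by
     (insert (XD L X D) {S. \<exists>a. eqc L a \<in> D \<and> (S = sbset L X D a \<or> S = sbset L X D (Neg a))})"

definition denot :: "('p,'i) form set \<Rightarrow> ('w,'p,'i) pointed set \<Rightarrow> ('p,'i) form set set
                   \<Rightarrow> ('p,'i) form \<Rightarrow> ('w,'p,'i) pointed set set" where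
  "denot L X D a = {c \<in> XD L X D. \<forall>x\<in>c. psat x a}"

definition clopen_in :: "'a topology \<Rightarrow> 'a set \<Rightarrow> bool" where
  "clopen_in T Y \<longleftrightarrow> openin T Y \<and> closedin T Y"

definition representative :: "('p,'i) form set \<Rightarrow> ('p,'i) form set set \<Rightarrow> bool" where
  "representative L D \<longleftrightarrow>
     (\<forall>a. \<exists>S \<subseteq> D. \<forall>J \<subseteq> S.
        (let B = {b. eqc L b \<in> J} \<union> {Neg b | b. eqc L b \<in> S - J}
         in entails L B a \<or> entails L B (Neg a)))"

definition saturated :: "('p,'i) form set \<Rightarrow> ('w,'p,'i) pointed set \<Rightarrow> ('p,'i) form set set \<Rightarrow> bool" where
  "saturated L X D \<longleftrightarrow>
     (\<forall>Y Y'. Y \<subseteq> D \<longrightarrow> Y' \<subseteq> D \<longrightarrow>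
        (let B = {b. eqc L b \<in> Y} \<union> {Neg b | b. eqc L b \<in> Y'}
         in consistent L B \<longrightarrow> (\<exists>x\<in>X. \<forall>b\<in>B. psat x b)))"

definition reflects :: "('p,'i) form set \<Rightarrow> ('w,'p,'i) pointed set \<Rightarrow> ('p,'i) form set set \<Rightarrow> bool" where
  "reflects L X D \<longleftrightarrow>
     (\<forall>Y. Y \<subseteq> XD L X D \<longrightarrow> (clopen_in (TD L X D) Y \<longleftrightarrow> (\<exists>a. Y = denot L X D a)))"

end

theory Submission imports Defs begin

declare split_paired_All[simp del] split_paired_Ex[simp del]

lemma psat_simps[simp]:
  "psat x Top" "psat x (Neg a) = (\<not> psat x a)" "psat x (Conj a b) = (psat x a \<and> psat x b)"
  "psat x (Imp a b) = (psat x a \<longrightarrow> psat x b)" "psat x (Iff a b) = (psat x a \<longleftrightarrow> psat x b)"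
  "psat x (Disj a b) = (psat x a \<or> psat x b)"
  by (auto simp: psat_def Imp_def Iff_def Disj_def)

lemma psat_conj_list: "psat x (conj_list as) = (\<forall>b\<in>set as. psat x b)"
  by (induction as) auto

definition gens where
  "gens L X D = insert (XD L X D) {S. \<exists>a. eqc L a \<in> D \<and> (S = sbset L X D a \<or> S = sbset L X D (Neg a))}"

definition lit where
  "lit L D b \<longleftrightarrow> (\<exists>a'. eqc L a' \<in> D \<and> (b = a' \<or> b = Neg a'))"

lemma TD_gens: "TD L X D = topology_generated_by (gens L X D)"
  by (simp add: TD_def gens_def)

lemma cls_sub: "cls L X D x \<subseteq> X" by (auto simp: cls_def)
lemma cls_mem: "y \<in> cls L X D x \<Longrightarrow> y \<in> X" by (simp add: cls_def)
lemma cls_self: "x \<in> X \<Longrightarrow> x \<in> cls L X D x" by (auto simp: cls_def)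

lemma lit_agree: "lit L D b \<Longrightarrow> y \<in> cls L X D x \<Longrightarrow> psat y b = psat x b"
  by (auto simp: lit_def cls_def)

lemma lit_gen: "lit L D b \<Longrightarrow> sbset L X D b \<in> gens L X D"
  by (auto simp: lit_def gens_def)

lemma sbset_sat: "lit L D b \<Longrightarrow> c \<in> sbset L X D b \<Longrightarrow> y \<in> c \<Longrightarrow> psat y b"
  by (auto simp: sbset_def dest: lit_agree)

lemma sbset_sub: "sbset L X D b \<subseteq> XD L X D" by (auto simp: sbset_def XD_def)

lemma gens_sub: "S \<in> gens L X D \<Longrightarrow> S \<subseteq> XD L X D"
  using sbset_sub[of L X D] by (auto simp: gens_def)

lemma topspace_TD: "topspace (TD L X D) = XD L X D"
  unfolding TD_gens topology_generated_by_topspace using gens_sub[of _ L X D] by (auto simp: gens_def)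

lemma open_gen: "S \<in> gens L X D \<Longrightarrow> openin (TD L X D) S"
  unfolding TD_gens by (rule topology_generated_by_Basis)

lemma sbset_denot: "lit L D b \<Longrightarrow> sbset L X D b = denot L X D b"
  unfolding denot_def
  apply (auto simp: sbset_def XD_def dest: lit_agree)
  using cls_self by blast

context
  fixes L :: "('p,'i) form set" and X :: "('w,'p,'i) pointed set" and D :: "('p,'i) form set set"
  assumes N: "normal_logic L" and S: "sound_wrt L X"
begin

lemma taut_in: "tautology a \<Longrightarrow> a \<in> L" using N by (simp add: normal_logic_def)

lemma sound_in: "a \<in> L \<Longrightarrow> x \<in> X \<Longrightarrow> psat x a" using S by (simp add: sound_wrt_def)

lemma eqc_sat: assumes "x \<in> X" "eqc L a = eqc L b" shows "psat x a = psat x b"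
proof -
  have "tautology (Iff b b)" by (simp add: tautology_def Iff_def Imp_def)
  then have "b \<in> eqc L b" using taut_in by (simp add: eqc_def)
  then have "b \<in> eqc L a" using assms(2) by simp
  then have "Iff a b \<in> L" by (simp add: eqc_def)
  then show ?thesis using sound_in[OF _ assms(1)] by fastforce
qed

lemma key:
  assumes R: "representative L D" and x: "x \<in> X"
  shows "\<exists>as. (\<forall>b\<in>set as. lit L D b \<and> psat x b) \<and>
           (Imp (conj_list as) a \<in> L \<or> Imp (conj_list as) (Neg a) \<in> L)"
proof -
  obtain Sx where Sx: "Sx \<subseteq> D" and H: "\<forall>J \<subseteq> Sx.
        (let B = {b. eqc L b \<in> J} \<union> {Neg b | b. eqc L b \<in> Sx - J}
         in entails L B a \<or> entails L B (Neg a))"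
    using R unfolding representative_def by blast
  define J where "J = {e \<in> Sx. \<exists>b. e = eqc L b \<and> psat x b}"
  define B where "B = {b. eqc L b \<in> J} \<union> {Neg b | b. eqc L b \<in> Sx - J}"
  have "J \<subseteq> Sx" by (auto simp: J_def)
  then have E: "entails L B a \<or> entails L B (Neg a)" using H unfolding B_def Let_def by blast
  have Bprop: "lit L D b \<and> psat x b" if bB: "b \<in> B" for b
  proof (cases "eqc L b \<in> J")
    case True
    then obtain b' where bb: "eqc L b = eqc L b'" "psat x b'" "eqc L b \<in> D" using Sx by (auto simp: J_def)
    have "psat x b" using eqc_sat[OF x bb(1)] bb(2) by blast
    moreover have "lit L D b" unfolding lit_def using bb(3) by blast
    ultimately show ?thesis by blast
  next
    case False
    then obtain b' where b': "b = Neg b'" "eqc L b' \<in> Sx - J" using bB False unfolding B_def by blast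
    then have "\<not> psat x b'" by (auto simp: J_def)
    moreover have "lit L D b" unfolding lit_def using b' Sx by blast
    ultimately show ?thesis using b' by simp
  qed
  from E obtain as where "set as \<subseteq> B" "Imp (conj_list as) a \<in> L \<or> Imp (conj_list as) (Neg a) \<in> L"
    by (auto simp: entails_def)
  then show ?thesis using Bprop by blast
qed

lemma dichot:
  assumes R: "representative L D" and x: "x \<in> X"
  shows "(\<forall>y\<in>cls L X D x. psat y a) \<or> (\<forall>y\<in>cls L X D x. psat y (Neg a))"
proof -
  obtain as where A: "\<forall>b\<in>set as. lit L D b \<and> psat x b"
     and I: "Imp (conj_list as) a \<in> L \<or> Imp (conj_list as) (Neg a) \<in> L"
    using key[OF R x] by blast
  have "psat y (conj_list as)" if "y \<in> cls L X D x" for y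
    using A lit_agree[OF _ that] by (auto simp: psat_conj_list)
  moreover have "y \<in> X" if "y \<in> cls L X D x" for y using that by (rule cls_mem)
  ultimately have "psat y a" if "y \<in> cls L X D x" "Imp (conj_list as) a \<in> L" for y
    using that sound_in[of "Imp (conj_list as) a" y] by simp
  moreover have "psat y (Neg a)" if "y \<in> cls L X D x" "Imp (conj_list as) (Neg a) \<in> L" for y
    using that sound_in[of "Imp (conj_list as) (Neg a)" y] \<open>\<And>y. y \<in> cls L X D x \<Longrightarrow> psat y (conj_list as)\<close> cls_mem
    by (metis psat_simps(4))
  ultimately show ?thesis using I by blast
qed

lemma nbhd:
  assumes R: "representative L D" and x: "x \<in> X" and xa: "psat x a"
  shows "\<exists>U. openin (TD L X D) U \<and> cls L X D x \<in> U \<and> U \<subseteq> denot L X D a"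
proof -
  obtain as where A: "\<forall>b\<in>set as. lit L D b \<and> psat x b"
     and I: "Imp (conj_list as) a \<in> L \<or> Imp (conj_list as) (Neg a) \<in> L"
    using key[OF R x] by blast
  have cx: "psat x (conj_list as)" using A by (auto simp: psat_conj_list)
  have I1: "Imp (conj_list as) a \<in> L"
    using I cx xa sound_in[OF _ x] by fastforce
  define U where "U = \<Inter> (insert (XD L X D) (sbset L X D ` set as))"
  have "openin (TD L X D) U" unfolding U_def
  proof (rule openin_Inter)
    fix T assume "T \<in> insert (XD L X D) (sbset L X D ` set as)"
    then show "openin (TD L X D) T"
    proof
      assume "T = XD L X D" then show ?thesis by (auto intro: open_gen simp: gens_def)
    next
      assume "T \<in> sbset L X D ` set as" then show ?thesis using A open_gen lit_gen by blast
    qed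
  qed auto
  moreover have "cls L X D x \<in> U"
  proof -
    have "cls L X D x \<in> XD L X D" using x by (simp add: XD_def)
    moreover have "cls L X D x \<in> sbset L X D b" if "b \<in> set as" for b
      using A that x unfolding sbset_def by blast
    ultimately show ?thesis by (simp add: U_def)
  qed
  moreover have "U \<subseteq> denot L X D a"
  proof
    fix c assume c: "c \<in> U"
    then have cX: "c \<in> XD L X D" by (auto simp: U_def)
    have "psat y a" if "y \<in> c" for y
    proof -
      have yX: "y \<in> X" using cX that cls_mem unfolding XD_def by blast
      have "\<forall>b\<in>set as. c \<in> sbset L X D b" using c by (simp add: U_def)
      then have "psat y (conj_list as)"
        unfolding psat_conj_list using A that sbset_sat by blast
      then show ?thesis using I1 sound_in[OF _ yX] by fastforce
    qed
    then show "c \<in> denot L X D a" using cX by (auto simp: denot_def)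
  qed
  ultimately show ?thesis by blast
qed

lemma denot_open:
  assumes R: "representative L D"
  shows "openin (TD L X D) (denot L X D a)"
proof (subst openin_subopen, intro ballI)
  fix c assume "c \<in> denot L X D a"
  then obtain x where x: "x \<in> X" "c = cls L X D x" "\<forall>y\<in>c. psat y a"
    by (auto simp: denot_def XD_def)
  then have "psat x a" using cls_self by blast
  then show "\<exists>T. openin (TD L X D) T \<and> c \<in> T \<and> T \<subseteq> denot L X D a"
    using nbhd[OF R x(1)] x by blast
qed

lemma denot_neg:
  assumes R: "representative L D"
  shows "denot L X D (Neg a) = XD L X D - denot L X D a"
proof -
  have "c \<in> denot L X D (Neg a)" if c: "c \<in> XD L X D" "c \<notin> denot L X D a" for c
  proof -
    obtain x where x: "x \<in> X" "c = cls L X D x" using c unfolding XD_def by blast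
    then show ?thesis using dichot[OF R x(1), of a] c by (auto simp: denot_def)
  qed
  moreover have "c \<notin> denot L X D a" if c: "c \<in> denot L X D (Neg a)" for c
  proof -
    obtain x where x: "x \<in> X" "c = cls L X D x" using c unfolding XD_def denot_def by blast
    then show ?thesis using c cls_self[OF x(1)] unfolding denot_def by auto
  qed
  moreover have "denot L X D (Neg a) \<subseteq> XD L X D" unfolding denot_def by blast
  ultimately show ?thesis by blast
qed

lemma denot_clopen:
  assumes R: "representative L D"
  shows "clopen_in (TD L X D) (denot L X D a)"
proof -
  have sub: "denot L X D a \<subseteq> XD L X D" by (auto simp: denot_def)
  have "XD L X D - denot L X D a = denot L X D (Neg a)" using denot_neg[OF R] by simp
  then show ?thesis
    unfolding clopen_in_def closedin_def topspace_TD using denot_open[OF R] sub by simp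
qed


lemma denot_conj: "denot L X D (Conj a b) = denot L X D a \<inter> denot L X D b"
  by (auto simp: denot_def)

lemma denot_disj:
  assumes R: "representative L D"
  shows "denot L X D (Disj a b) = denot L X D a \<union> denot L X D b"
proof -
  have "c \<in> denot L X D a \<union> denot L X D b" if c: "c \<in> denot L X D (Disj a b)" for c
  proof -
    obtain x where x: "x \<in> X" "c = cls L X D x" using c unfolding XD_def denot_def by blast
    show ?thesis using dichot[OF R x(1), of a] c x(2) unfolding denot_def by auto
  qed
  then show ?thesis by (auto simp: denot_def)
qed

lemma TD_subbase:
  "TD L X D = topology (arbitrary union_of (finite intersection_of (\<lambda>x. x \<in> gens L X D) relative_to XD L X D))"
  (is "_ = ?T")
proof (subst topology_eq, intro allI iffI)
  fix S assume "openin (TD L X D) S"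
  then have "generate_topology_on (gens L X D) S"
    unfolding TD_gens openin_topology_generated_by_iff .
  then show "openin ?T S"
  proof induction
    case Empty then show ?case by simp
  next
    case (Int a b) then show ?case by (simp add: openin_Int)
  next
    case (UN K) then show ?case by (simp add: openin_Union)
  next
    case (Basis s)
    then show ?case unfolding openin_subbase
      by (intro arbitrary_union_of_inc relative_to_subset_inc gens_sub finite_intersection_of_inc)
         (auto intro: gens_sub)
  qed
next
  fix S assume S: "openin ?T S"
  show "openin (TD L X D) S"
    by (rule minimal_topology_subbase[OF _ _ S]) (auto intro!: open_gen simp: gens_def)
qed

lemma compact_TD:
  assumes C: "compact_logic L" and Sat: "saturated L X D"
  shows "compact_space (TD L X D)"
proof (rule Alexander_subbase_alt[where U="XD L X D" and \<B>="gens L X D"])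
  show "XD L X D \<subseteq> \<Union> (gens L X D)" by (auto simp: gens_def)
  show "topology (arbitrary union_of (finite intersection_of (\<lambda>x. x \<in> gens L X D) relative_to XD L X D)) = TD L X D"
    using TD_subbase by simp
  fix Cv assume Cv: "Cv \<subseteq> gens L X D" "XD L X D \<subseteq> \<Union> Cv"
  show "\<exists>C'. finite C' \<and> C' \<subseteq> Cv \<and> XD L X D \<subseteq> \<Union> C'"
  proof (rule ccontr)
    assume nf: "\<not> ?thesis"
    have XDn: "XD L X D \<notin> Cv"
    proof
      assume "XD L X D \<in> Cv"
      then have "finite {XD L X D} \<and> {XD L X D} \<subseteq> Cv \<and> XD L X D \<subseteq> \<Union> {XD L X D}" by simp
      then show False using nf by blast
    qed
    define Yp where "Yp = {e \<in> D. \<exists>b. e = eqc L b \<and> sbset L X D (Neg b) \<in> Cv}"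
    define Yn where "Yn = {e \<in> D. \<exists>b. e = eqc L b \<and> sbset L X D b \<in> Cv}"
    define B where "B = {b. eqc L b \<in> Yp} \<union> {Neg b | b. eqc L b \<in> Yn}"
    have fin: "consistent L G0" if G0: "G0 \<subseteq> B" "finite G0" for G0
    proof -
      have ex: "\<exists>K \<in> Cv. \<forall>x\<in>X. cls L X D x \<notin> K \<longrightarrow> psat x g" if g: "g \<in> G0" for g
      proof (cases "eqc L g \<in> Yp")
        case True
        then obtain b where b: "eqc L g = eqc L b" "sbset L X D (Neg b) \<in> Cv" unfolding Yp_def by blast
        have "psat x g" if x: "x \<in> X" "cls L X D x \<notin> sbset L X D (Neg b)" for x
        proof -
          have "\<not> psat x (Neg b)" using x unfolding sbset_def by blast
          then have "psat x b" by simp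
          then show ?thesis using eqc_sat[OF x(1) b(1)] by blast
        qed
        then show ?thesis using b(2) by blast
      next
        case False
        then obtain b' where b': "g = Neg b'" "eqc L b' \<in> Yn" using g G0 unfolding B_def by blast
        then obtain b where b: "eqc L b' = eqc L b" "sbset L X D b \<in> Cv" unfolding Yn_def by blast
        have "psat x g" if x: "x \<in> X" "cls L X D x \<notin> sbset L X D b" for x
        proof -
          have "\<not> psat x b" using x unfolding sbset_def by blast
          then have "\<not> psat x b'" using eqc_sat[OF x(1) b(1)] by blast
          then show ?thesis using b'(1) by simp
        qed
        then show ?thesis using b(2) by blast
      qed
      then obtain f where f: "\<forall>g\<in>G0. f g \<in> Cv \<and> (\<forall>x\<in>X. cls L X D x \<notin> f g \<longrightarrow> psat x g)"
        by metis
      have "finite (f ` G0) \<and> f ` G0 \<subseteq> Cv" using f G0(2) by auto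
      then have "\<not> XD L X D \<subseteq> \<Union> (f ` G0)" using nf by blast
      then obtain c where c: "c \<in> XD L X D" "c \<notin> \<Union> (f ` G0)" by blast
      then obtain x where x: "x \<in> X" "c = cls L X D x" unfolding XD_def by blast
      have allg: "\<forall>g\<in>G0. psat x g" using f c x by blast
      show ?thesis unfolding consistent_def
      proof
        assume "\<exists>as. set as \<subseteq> G0 \<and> Neg (conj_list as) \<in> L"
        then obtain as where as: "set as \<subseteq> G0" "Neg (conj_list as) \<in> L" by blast
        have "psat x (conj_list as)" unfolding psat_conj_list using as(1) allg by blast
        moreover have "psat x (Neg (conj_list as))" using sound_in[OF as(2) x(1)] .
        ultimately show False by simp
      qed
    qed
    have cB: "consistent L B" using C fin unfolding compact_logic_def by blast
    have "Yp \<subseteq> D" "Yn \<subseteq> D" unfolding Yp_def Yn_def by auto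
    then have "consistent L B \<longrightarrow> (\<exists>x\<in>X. \<forall>b\<in>B. psat x b)"
      using Sat unfolding saturated_def Let_def B_def by blast
    then obtain x where x: "x \<in> X" "\<forall>b\<in>B. psat x b" using cB by blast
    have "cls L X D x \<in> XD L X D" using x(1) by (simp add: XD_def)
    then obtain K where K: "K \<in> Cv" "cls L X D x \<in> K" using Cv by blast
    then have "K \<in> gens L X D" "K \<noteq> XD L X D" using Cv XDn by auto
    then obtain a' where a': "eqc L a' \<in> D" "K = sbset L X D a' \<or> K = sbset L X D (Neg a')"
      unfolding gens_def by blast
    have xx: "x \<in> cls L X D x" using cls_self[OF x(1)] .
    show False
    proof (cases "K = sbset L X D a'")
      case True
      then have "eqc L a' \<in> Yn" using a' K unfolding Yn_def by blast
      then have "Neg a' \<in> B" unfolding B_def by blast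
      then have "\<not> psat x a'" using x by fastforce
      moreover have "lit L D a'" unfolding lit_def using a' by blast
      then have "psat x a'" using sbset_sat K True xx by blast
      ultimately show False by blast
    next
      case False
      then have KN: "K = sbset L X D (Neg a')" using a' by blast
      then have "eqc L a' \<in> Yp" using a' K unfolding Yp_def by blast
      then have "a' \<in> B" unfolding B_def by blast
      then have "psat x a'" using x by blast
      moreover have "lit L D (Neg a')" unfolding lit_def using a' by blast
      then have "psat x (Neg a')" using sbset_sat K KN xx by blast
      ultimately show False by simp
    qed
  qed
qed

lemma open_basis:
  assumes "openin (TD L X D) U" "c \<in> U"
  shows "\<exists>a. c \<in> denot L X D a \<and> denot L X D a \<subseteq> U"
proof -
  have "generate_topology_on (gens L X D) U"
    using assms(1) unfolding TD_gens openin_topology_generated_by_iff .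
  then show ?thesis using assms(2)
  proof (induction arbitrary: c)
    case Empty then show ?case by simp
  next
    case (Int a b)
    then obtain a1 a2 where "c \<in> denot L X D a1" "denot L X D a1 \<subseteq> a"
       "c \<in> denot L X D a2" "denot L X D a2 \<subseteq> b" by blast
    then show ?case using denot_conj[of a1 a2] by blast
  next
    case (UN K) then show ?case by blast
  next
    case (Basis s)
    show ?case
    proof (cases "s = XD L X D")
      case True
      then have "s = denot L X D Top" by (simp add: denot_def)
      then show ?thesis using Basis by blast
    next
      case False
      then obtain a' where a': "eqc L a' \<in> D" "s = sbset L X D a' \<or> s = sbset L X D (Neg a')"
        using Basis unfolding gens_def by blast
      then have "lit L D a'" "lit L D (Neg a')" unfolding lit_def by blast+
      then have "s = denot L X D a' \<or> s = denot L X D (Neg a')" using a'(2) sbset_denot by metis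
      then show ?thesis using Basis by blast
    qed
  qed
qed

lemma fin_union_denot:
  assumes R: "representative L D"
  shows "finite F \<Longrightarrow> F \<subseteq> range (denot L X D) \<Longrightarrow> \<exists>a. \<Union>F = denot L X D a"
proof (induction F rule: finite_induct)
  case empty
  have "denot L X D (Neg Top) = {}" by (auto simp: denot_def XD_def dest: cls_self)
  then show ?case by (metis Union_empty)
next
  case (insert A F)
  then obtain b where b: "\<Union>F = denot L X D b" by blast
  obtain a where a: "A = denot L X D a" using insert by blast
  show ?case using denot_disj[OF R, of a b] a b by auto
qed

lemma reflects_TD:
  assumes R: "representative L D" and C: "compact_logic L" and Sat: "saturated L X D"
  shows "reflects L X D"
  unfolding reflects_def
proof (intro allI impI iffI)
  fix Y assume Y: "Y \<subseteq> XD L X D" "clopen_in (TD L X D) Y"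
  have cY: "compactin (TD L X D) Y"
    using closedin_compact_space[OF compact_TD[OF C Sat]] Y(2) by (simp add: clopen_in_def)
  define U where "U = {A. A \<in> range (denot L X D) \<and> A \<subseteq> Y}"
  have "\<forall>A\<in>U. openin (TD L X D) A" using denot_open[OF R] unfolding U_def by blast
  moreover have "Y \<subseteq> \<Union>U"
  proof
    fix c assume "c \<in> Y"
    then obtain a where "c \<in> denot L X D a" "denot L X D a \<subseteq> Y"
      using open_basis Y(2) unfolding clopen_in_def by blast
    then show "c \<in> \<Union>U" unfolding U_def by blast
  qed
  ultimately obtain F where F: "finite F" "F \<subseteq> U" "Y \<subseteq> \<Union>F"
    using cY unfolding compactin_def by blast
  have "\<Union>F = Y" using F unfolding U_def by blast
  moreover have "\<exists>a. \<Union>F = denot L X D a"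
    using fin_union_denot[OF R F(1)] F(2) unfolding U_def by blast
  ultimately show "\<exists>a. Y = denot L X D a" by metis
next
  fix Y assume "\<exists>a. Y = denot L X D a"
  then show "clopen_in (TD L X D) Y" using denot_clopen[OF R] by blast
qed

end

theorem proposition25:
  fixes L :: "('p::countable, 'i::countable) form set"
    and X :: "('w, 'p, 'i) pointed set"
    and D :: "('p, 'i) form set set"
  assumes "normal_logic L"
    and "sound_wrt L X"
    and "D \<subseteq> Lbold L"
    and "compact_logic L"
    and "representative L D"
  shows "(\<forall>a. clopen_in (TD L X D) (denot L X D a))
         \<and> (saturated L X D \<longrightarrow> reflects L X D)"
  using denot_clopen[OF assms(1,2,5)] reflects_TD[OF assms(1,2,5,4)] by blast

end
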